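(* There is an absolute constant $c>0$ such that the following holds. Let $\mathcal{J}$ be an input set for Machine Covering on $m$ machines that is proper of degree $d$, with $n$ divisible by $8$, arriving in uniformly random order, and run the procedure $A_d$ on it. Then, with probability at least $c$, every large job is scheduled onto a large machine.
   Context: Machine Covering: $n$ jobs with non-negative sizes assigned to $m$ identical parallel machines, maximizing the minimum load; $\mathrm{OPT}(\mathcal{J})$ is the optimal offline minimum load. $P_i$ is the $i$-th largest job size. A job is large if its size exceeds $\frac{\mathrm{OPT}(\mathcal{J})}{100\sqrt[4]{m}}$, small otherwise; $k$ is the number of large jobs. $\mathcal{J}$ is simple if $n<m$, or $k\ge m$, or $k\le m-\frac{m^{3/4}}{50}$; otherwise it is proper of degree $d:=\lceil\log_2(m-k)\rceil$. Procedure $A_d$ (online, knows $n$): designate $2^d$ machines as small machines and the other $m-2^d$ as large machines. Sampling phase: each of the first $n/8$ arriving jobs is assigned to a least loaded large machine; then let $P^{\uparrow}$ be the $\left(\frac{m-2^d}{8}-\frac{\sqrt m}{2}\right)$-th largest size among these $n/8$ jobs. Partition phase: set $\tau=0$; for each subsequent job of size $p$: if $p\ge P^\uparrow$, assign it to a least loaded large machine; otherwise, if $p>\tau$, set $\tau:=p$ with probability $\frac{1}{9\cdot 2^d\sqrt m}$ (independent coin); then if $p\le\tau$ assign the job to a least loaded small machine, else to a least loaded large machine. *)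

theory Defs
  imports "HOL-Probability.Probability"
begin

text \<open>An input is a list ps of job sizes; job j (j < length ps) has size ps ! j.
  An assignment maps jobs to machines {..<m}.\<close>

definition load :: "real list \<Rightarrow> (nat \<Rightarrow> nat) \<Rightarrow> nat \<Rightarrow> real" where
  "load ps f i = (\<Sum>j\<in>{j. j < length ps \<and> f j = i}. ps ! j)"

text \<open>Optimal offline minimum load (m \<ge> 1 assumed where used).\<close>
definition OPT :: "nat \<Rightarrow> real list \<Rightarrow> real" where
  "OPT m ps = Max ((\<lambda>f. Min (load ps f ` {..<m})) ` ({..<length ps} \<rightarrow>\<^sub>E {..<m}))"

definition large_job :: "nat \<Rightarrow> real list \<Rightarrow> nat \<Rightarrow> bool" where
  "large_job m ps j \<longleftrightarrow> ps ! j > OPT m ps / (100 * root 4 (real m))"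

definition num_large :: "nat \<Rightarrow> real list \<Rightarrow> nat" where
  "num_large m ps = card {j. j < length ps \<and> large_job m ps j}"

definition simple_input :: "nat \<Rightarrow> real list \<Rightarrow> bool" where
  "simple_input m ps \<longleftrightarrow> length ps < m \<or> num_large m ps \<ge> m \<or>
      real (num_large m ps) \<le> real m - real m powr (3/4) / 50"

definition proper_input :: "nat \<Rightarrow> real list \<Rightarrow> bool" where
  "proper_input m ps \<longleftrightarrow> \<not> simple_input m ps"

definition degree :: "nat \<Rightarrow> real list \<Rightarrow> nat" where
  "degree m ps = nat \<lceil>log 2 (real (m - num_large m ps))\<rceil>"

definition coin_prob :: "nat \<Rightarrow> nat \<Rightarrow> real" where
  "coin_prob m d = 1 / (9 * 2 ^ d * sqrt (real m))"

text \<open>Least loaded machine in S; ties broken by smallest index (irrelevant for the event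
  considered, which only depends on whether a job goes to a small or a large machine).\<close>
definition least_loaded :: "(nat \<Rightarrow> real) \<Rightarrow> nat set \<Rightarrow> nat" where
  "least_loaded L S = (LEAST i. i \<in> S \<and> (\<forall>j\<in>S. L i \<le> L j))"

text \<open>Threshold P-up: the r-th largest size among the first n/8 arriving jobs, where
  r = ceiling((m - 2^d)/8 - sqrt m / 2). Arrival order: job \<pi> t arrives at time t.\<close>
definition threshold :: "nat \<Rightarrow> nat \<Rightarrow> real list \<Rightarrow> (nat \<Rightarrow> nat) \<Rightarrow> real" where
  "threshold m d ps \<pi> =
     (let xs = rev (sort (map (\<lambda>t. ps ! \<pi> t) [0..<length ps div 8]));
          r = nat \<lceil>real (m - 2 ^ d) / 8 - sqrt (real m) / 2\<rceil>
      in xs ! (r - 1))"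

text \<open>Machines {..<2^d} are small, {2^d..<m} are large. State: loads, assignment, tau.
  cs t is the independent coin used (if needed) at time t.\<close>
fun Ad_step :: "nat \<Rightarrow> nat \<Rightarrow> real list \<Rightarrow> (nat \<Rightarrow> nat) \<Rightarrow> (nat \<Rightarrow> bool) \<Rightarrow> real \<Rightarrow>
    (nat \<Rightarrow> real) \<times> (nat \<Rightarrow> nat) \<times> real \<Rightarrow> nat \<Rightarrow> (nat \<Rightarrow> real) \<times> (nat \<Rightarrow> nat) \<times> real" where
  "Ad_step m d ps \<pi> cs Pup (L, A, \<tau>) t =
    (let j = \<pi> t; p = ps ! j;
         put = (\<lambda>S \<tau>'. let i = least_loaded L S in (L(i := L i + p), A(j := i), \<tau>'))
     in if t < length ps div 8 then put {2 ^ d..<m} \<tau>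
        else if Pup \<le> p then put {2 ^ d..<m} \<tau>
        else (let \<tau>' = (if \<tau> < p \<and> cs t then p else \<tau>)
              in if p \<le> \<tau>' then put {..<2 ^ d} \<tau>' else put {2 ^ d..<m} \<tau>'))"

definition Ad_run :: "nat \<Rightarrow> nat \<Rightarrow> real list \<Rightarrow> (nat \<Rightarrow> nat) \<Rightarrow> (nat \<Rightarrow> bool) \<Rightarrow> nat \<Rightarrow> nat" where
  "Ad_run m d ps \<pi> cs =
     fst (snd (foldl (Ad_step m d ps \<pi> cs (threshold m d ps \<pi>)) (\<lambda>_. 0, \<lambda>_. 0, 0)
                     [0..<length ps]))"

definition Ad_space :: "nat \<Rightarrow> nat \<Rightarrow> real list \<Rightarrow> ((nat \<Rightarrow> nat) \<times> (nat \<Rightarrow> bool)) pmf" where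
  "Ad_space m d ps = pair_pmf (pmf_of_set {\<pi>. \<pi> permutes {..<length ps}})
      (Pi_pmf {..<length ps} False (\<lambda>_. bernoulli_pmf (coin_prob m d)))"

end

theory Submission
  imports Defs "HOL-Combinatorics.Permutations"
begin

lemma tr_eq_iff: "Transposition.transpose a t y = b \<longleftrightarrow> y = Transposition.transpose a t b"
  by (auto simp: transpose_eq_iff)

lemma perm_comp_card:
  assumes "\<rho> permutes A"
  shows "card {p. p permutes A \<and> Q p} = card {p. p permutes A \<and> Q (\<rho> \<circ> p)}"
proof -
  have "{p. p permutes A \<and> Q p} = (\<lambda>p. \<rho> \<circ> p) ` {p. p permutes A \<and> Q (\<rho> \<circ> p)}"
  proof (intro equalityI subsetI)
    fix p assume "p \<in> {p. p permutes A \<and> Q p}"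
    then have p: "p permutes A" "Q p" by auto
    have e: "\<rho> \<circ> (inv \<rho> \<circ> p) = p"
      using permutes_inverses(1)[OF assms] by (auto simp: fun_eq_iff)
    have "inv \<rho> \<circ> p permutes A"
      using p(1) permutes_inv[OF assms] by (simp add: permutes_compose)
    then have "inv \<rho> \<circ> p \<in> {p. p permutes A \<and> Q (\<rho> \<circ> p)}" using e p(2) by simp
    then show "p \<in> (\<lambda>p. \<rho> \<circ> p) ` {p. p permutes A \<and> Q (\<rho> \<circ> p)}"
      using e by (intro image_eqI[where x = "inv \<rho> \<circ> p"]) simp_all
  next
    fix p assume "p \<in> (\<lambda>p. \<rho> \<circ> p) ` {p. p permutes A \<and> Q (\<rho> \<circ> p)}"
    then obtain p' where "p = \<rho> \<circ> p'" "p' permutes A" "Q (\<rho> \<circ> p')" by blast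
    then show "p \<in> {p. p permutes A \<and> Q p}"
      using assms by (simp add: permutes_compose)
  qed
  moreover have "inj_on (\<lambda>p. \<rho> \<circ> p) {p. p permutes A \<and> Q (\<rho> \<circ> p)}"
  proof (rule inj_onI)
    fix p p' assume "\<rho> \<circ> p = \<rho> \<circ> p'"
    then have "\<And>x. \<rho> (p x) = \<rho> (p' x)" by (metis comp_apply)
    then show "p = p'" using permutes_inj[OF assms] by (auto simp: fun_eq_iff dest: injD)
  qed
  ultimately show ?thesis by (simp add: card_image)
qed


lemma perm_fix_eq:
  assumes "t \<in> A"
  shows "{p. p permutes A \<and> p t = t \<and> Q p} = {p. p permutes (A - {t}) \<and> Q p}"
proof (intro equalityI subsetI)
  fix p assume "p \<in> {p. p permutes A \<and> p t = t \<and> Q p}"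
  then show "p \<in> {p. p permutes (A - {t}) \<and> Q p}"
    by (auto intro: permutes_superset)
next
  fix p assume "p \<in> {p. p permutes (A - {t}) \<and> Q p}"
  then show "p \<in> {p. p permutes A \<and> p t = t \<and> Q p}"
    using permutes_subset[of p "A - {t}" A] permutes_not_in[of p "A - {t}" t] by auto
qed

lemma card_perm_val:
  assumes "finite A" "t \<in> A" "a \<in> A"
  shows "card {p. p permutes A \<and> p t = a} = fact (card A - 1)"
proof -
  have "card {p. p permutes A \<and> p t = a} = card {p. p permutes A \<and> (Transposition.transpose a t \<circ> p) t = a}"
    by (rule perm_comp_card) (simp add: permutes_swap_id assms)
  also have "{p. p permutes A \<and> (Transposition.transpose a t \<circ> p) t = a} = {p. p permutes A \<and> p t = t \<and> True}"
    by (auto simp: tr_eq_iff)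
  also have "\<dots> = {p. p permutes (A - {t}) \<and> True}"
    by (rule perm_fix_eq[OF assms(2)])
  also have "card \<dots> = fact (card A - 1)"
    using card_permutations[of "A - {t}"] assms by simp
  finally show ?thesis .
qed

lemma card_perm_val2:
  assumes "finite A" "t \<in> A" "a \<in> A" "t' \<in> A" "b \<in> A" "t \<noteq> t'" "a \<noteq> b"
  shows "card {p. p permutes A \<and> p t = a \<and> p t' = b} = fact (card A - 2)"
proof -
  define c where "c = Transposition.transpose a t b"
  have "card {p. p permutes A \<and> p t = a \<and> p t' = b} =
        card {p. p permutes A \<and> (Transposition.transpose a t \<circ> p) t = a \<and> (Transposition.transpose a t \<circ> p) t' = b}"
    by (rule perm_comp_card) (simp add: permutes_swap_id assms)
  also have "{p. p permutes A \<and> (Transposition.transpose a t \<circ> p) t = a \<and> (Transposition.transpose a t \<circ> p) t' = b}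
      = {p. p permutes A \<and> p t = t \<and> p t' = c}"
    unfolding c_def by (auto simp: tr_eq_iff)
  also have "\<dots> = {p. p permutes (A - {t}) \<and> p t' = c}"
    by (rule perm_fix_eq[OF assms(2)])
  also have "card \<dots> = fact (card (A - {t}) - 1)"
  proof (rule card_perm_val)
    show "c \<in> A - {t}" using assms unfolding c_def by (auto simp: transpose_eq_iff Transposition.transpose_def)
  qed (use assms in auto)
  also have "card (A - {t}) - 1 = card A - 2" using assms by simp
  finally show ?thesis .
qed

lemma cnt1:
  assumes "finite A" "S \<subseteq> A" "t \<in> A"
  shows "card {p. p permutes A \<and> p t \<in> S} = card S * fact (card A - 1)"
proof -
  have fS: "finite S" using assms finite_subset by blast
  have "{p. p permutes A \<and> p t \<in> S} = (\<Union>a\<in>S. {p. p permutes A \<and> p t = a})" by auto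
  also have "card \<dots> = (\<Sum>a\<in>S. card {p. p permutes A \<and> p t = a})"
  proof (rule card_UN_disjoint)
    show "finite S" by (rule fS)
    show "\<forall>i\<in>S. finite {p. p permutes A \<and> p t = i}"
      using finite_permutations[OF assms(1)] by (auto intro: rev_finite_subset)
  qed auto
  also have "\<dots> = (\<Sum>a\<in>S. fact (card A - 1))"
  proof (rule sum.cong[OF refl])
    fix a assume "a \<in> S"
    then show "card {p. p permutes A \<and> p t = a} = fact (card A - 1)"
      using assms by (intro card_perm_val) auto
  qed
  finally show ?thesis by simp
qed

lemma cnt2:
  assumes "finite A" "S \<subseteq> A" "t \<in> A" "t' \<in> A" "t \<noteq> t'"
  shows "card {p. p permutes A \<and> p t \<in> S \<and> p t' \<in> S} = card S * (card S - 1) * fact (card A - 2)"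
proof -
  have fS: "finite S" using assms finite_subset by blast
  have fP: "\<And>Q. finite {p. p permutes A \<and> Q p}"
    using finite_permutations[OF assms(1)] by (rule rev_finite_subset) auto
  have "{p. p permutes A \<and> p t \<in> S \<and> p t' \<in> S} =
     (\<Union>a\<in>S. \<Union>b\<in>S - {a}. {p. p permutes A \<and> p t = a \<and> p t' = b})"
  proof (intro equalityI subsetI)
    fix p assume "p \<in> {p. p permutes A \<and> p t \<in> S \<and> p t' \<in> S}"
    then have "p permutes A" "p t \<in> S" "p t' \<in> S" by auto
    moreover have "p t \<noteq> p t'" using permutes_inj[OF \<open>p permutes A\<close>] assms(5)
      by (auto dest: injD)
    ultimately show "p \<in> (\<Union>a\<in>S. \<Union>b\<in>S - {a}. {p. p permutes A \<and> p t = a \<and> p t' = b})"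
      by auto
  qed auto
  also have "card \<dots> = (\<Sum>a\<in>S. card (\<Union>b\<in>S - {a}. {p. p permutes A \<and> p t = a \<and> p t' = b}))"
    by (rule card_UN_disjoint) (use fS fP in auto)
  also have "\<dots> = (\<Sum>a\<in>S. (card S - 1) * fact (card A - 2))"
  proof (rule sum.cong)
    fix a assume a: "a \<in> S"
    have "card (\<Union>b\<in>S - {a}. {p. p permutes A \<and> p t = a \<and> p t' = b}) =
        (\<Sum>b\<in>S - {a}. card {p. p permutes A \<and> p t = a \<and> p t' = b})"
      by (rule card_UN_disjoint) (use fS fP in auto)
    also have "\<dots> = (\<Sum>b\<in>S - {a}. fact (card A - 2))"
    proof (rule sum.cong[OF refl])
      fix b assume "b \<in> S - {a}"
      then show "card {p. p permutes A \<and> p t = a \<and> p t' = b} = fact (card A - 2)"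
        using assms a by (intro card_perm_val2) auto
    qed
    also have "\<dots> = (card S - 1) * fact (card A - 2)"
      using a fS by simp
    finally show "card (\<Union>b\<in>S - {a}. {p. p permutes A \<and> p t = a \<and> p t' = b}) = (card S - 1) * fact (card A - 2)" .
  qed simp
  finally show ?thesis by simp
qed

lemma sumX1:
  assumes "finite A" "S \<subseteq> A" "T \<subseteq> A"
  shows "(\<Sum>p\<in>{p. p permutes A}. (\<Sum>t\<in>T. of_bool (p t \<in> S) :: real)) =
     real (card T) * real (card S) * fact (card A - 1)"
proof -
  have fT: "finite T" using assms finite_subset by blast
  have fP: "finite {p. p permutes A}" using finite_permutations[OF assms(1)] by simp
  have "(\<Sum>p\<in>{p. p permutes A}. (\<Sum>t\<in>T. of_bool (p t \<in> S) :: real)) =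
     (\<Sum>t\<in>T. \<Sum>p\<in>{p. p permutes A}. of_bool (p t \<in> S))"
    by (rule sum.swap)
  also have "\<dots> = (\<Sum>t\<in>T. real (card {p. p permutes A \<and> p t \<in> S}))"
    by (rule sum.cong) (auto simp: fP Collect_conj_eq[symmetric] Int_def)
  also have "\<dots> = (\<Sum>t\<in>T. real (card S) * fact (card A - 1))"
  proof (rule sum.cong[OF refl])
    fix t assume t: "t \<in> T"
    have "card {p. p permutes A \<and> p t \<in> S} = card S * fact (card A - 1)"
      by (rule cnt1) (use assms t in auto)
    then show "real (card {p. p permutes A \<and> p t \<in> S}) = real (card S) * fact (card A - 1)"
      by (metis of_nat_fact of_nat_mult)
  qed
  finally show ?thesis by simp
qed

lemma sumX2:
  assumes "finite A" "S \<subseteq> A" "T \<subseteq> A"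
  shows "(\<Sum>p\<in>{p. p permutes A}. (\<Sum>t\<in>T. of_bool (p t \<in> S) :: real)^2) =
     real (card T) * real (card S) * fact (card A - 1) +
     real (card T) * (real (card T) - 1) * real (card S) * (real (card S) - 1) * fact (card A - 2)"
proof -
  have fT: "finite T" using assms finite_subset by blast
  have fP: "finite {p. p permutes A}" using finite_permutations[OF assms(1)] by simp
  have "(\<Sum>p\<in>{p. p permutes A}. (\<Sum>t\<in>T. of_bool (p t \<in> S) :: real)^2) =
     (\<Sum>p\<in>{p. p permutes A}. \<Sum>t\<in>T. \<Sum>t'\<in>T. of_bool (p t \<in> S \<and> p t' \<in> S))"
    by (simp add: power2_eq_square sum_product of_bool_conj)
  also have "\<dots> = (\<Sum>t\<in>T. \<Sum>p\<in>{p. p permutes A}. \<Sum>t'\<in>T. of_bool (p t \<in> S \<and> p t' \<in> S))"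
    by (rule sum.swap)
  also have "\<dots> = (\<Sum>t\<in>T. \<Sum>t'\<in>T. \<Sum>p\<in>{p. p permutes A}. of_bool (p t \<in> S \<and> p t' \<in> S))"
    by (rule sum.cong[OF refl], rule sum.swap)
  also have "\<dots> = (\<Sum>t\<in>T. \<Sum>t'\<in>T. real (card {p. p permutes A \<and> p t \<in> S \<and> p t' \<in> S}))"
    by (intro sum.cong refl) (auto simp: fP Collect_conj_eq[symmetric] Int_def)
  also have "\<dots> = (\<Sum>t\<in>T. real (card S) * fact (card A - 1) +
        (real (card T) - 1) * (real (card S) * (real (card S) - 1) * fact (card A - 2)))"
  proof (rule sum.cong[OF refl])
    fix t assume t: "t \<in> T"
    have "(\<Sum>t'\<in>T. real (card {p. p permutes A \<and> p t \<in> S \<and> p t' \<in> S})) =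
       real (card {p. p permutes A \<and> p t \<in> S \<and> p t \<in> S}) +
       (\<Sum>t'\<in>T - {t}. real (card {p. p permutes A \<and> p t \<in> S \<and> p t' \<in> S}))"
      by (rule sum.remove[OF fT t])
    also have "(\<Sum>t'\<in>T - {t}. real (card {p. p permutes A \<and> p t \<in> S \<and> p t' \<in> S})) =
        (\<Sum>t'\<in>T - {t}. real (card S) * (real (card S) - 1) * fact (card A - 2))"
    proof (rule sum.cong[OF refl])
      fix t' assume t': "t' \<in> T - {t}"
      have "card {p. p permutes A \<and> p t \<in> S \<and> p t' \<in> S} = card S * (card S - 1) * fact (card A - 2)"
        using cnt2[of A S t t'] assms t t' by auto
      then show "real (card {p. p permutes A \<and> p t \<in> S \<and> p t' \<in> S}) =
          real (card S) * (real (card S) - 1) * fact (card A - 2)"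
        by (cases "card S") (simp_all add: of_nat_diff algebra_simps)
    qed
    also have "real (card {p. p permutes A \<and> p t \<in> S \<and> p t \<in> S}) = real (card S) * fact (card A - 1)"
      using cnt1[of A S t] assms t by auto
    finally have eq: "(\<Sum>t'\<in>T. real (card {p. p permutes A \<and> p t \<in> S \<and> p t' \<in> S})) =
        real (card S) * fact (card A - 1) + (\<Sum>t'\<in>T - {t}. real (card S) * (real (card S) - 1) * fact (card A - 2))" .
    have "card T > 0" using t fT card_gt_0_iff by blast
    then have "real (card T - 1) = real (card T) - 1" by (simp add: of_nat_diff)
    then show "(\<Sum>t'\<in>T. real (card {p. p permutes A \<and> p t \<in> S \<and> p t' \<in> S})) =
        real (card S) * fact (card A - 1) +
        (real (card T) - 1) * (real (card S) * (real (card S) - 1) * fact (card A - 2))"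
      using eq t fT by (simp add: card_Diff_singleton mult.assoc)
  qed
  finally show ?thesis by (simp add: algebra_simps sum.distrib)
qed

lemma alg_key:
  fixes n h s :: real
  assumes "0 \<le> h" "h \<le> n" "0 \<le> s" "s \<le> n" "h = 0 \<or> 1 \<le> h" "n > 0"
  shows "h * (h - 1) * s * (s - 1) \<le> (h * s)^2 * (n - 1) / n"
proof -
  have "(h * s)^2 * (n - 1) - n * (h * (h - 1) * s * (s - 1)) = h * s * ((n - h) * s + n * (h - 1))"
    by (simp add: algebra_simps power2_eq_square)
  also have "\<dots> \<ge> 0"
  proof (cases "h = 0")
    case False
    then have "1 \<le> h" using assms by auto
    then show ?thesis using assms by (auto intro!: mult_nonneg_nonneg add_nonneg_nonneg)
  qed simp
  finally have "n * (h * (h - 1) * s * (s - 1)) \<le> (h * s)^2 * (n - 1)" by simp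
  then show ?thesis using assms(6) by (simp add: field_simps)
qed

lemma var_sum:
  assumes "finite A" "S \<subseteq> A" "T \<subseteq> A" "card A \<ge> 2"
  defines "\<mu> \<equiv> real (card T) * real (card S) / real (card A)"
  shows "(\<Sum>p\<in>{p. p permutes A}. ((\<Sum>t\<in>T. of_bool (p t \<in> S) :: real) - \<mu>)^2) \<le> fact (card A) * \<mu>"
proof -
  define n where "n = card A"
  define h where "h = real (card T)"
  define s where "s = real (card S)"
  define F :: real where "F = fact (n - 2)"
  define X where "X = (\<lambda>p. (\<Sum>t\<in>T. of_bool (p t \<in> S) :: real))"
  have fP: "finite {p. p permutes A}" using finite_permutations[OF assms(1)] by simp
  have cP: "real (card {p. p permutes A}) = fact n"
    using card_permutations[OF refl assms(1)] n_def by simp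
  have n2: "n \<ge> 2" using assms n_def by simp
  have f1: "(fact (n - 1) :: real) = (real n - 1) * F"
    using n2 fact_reduce[of "n - 1", where 'a=real] unfolding F_def
    by (simp add: of_nat_diff numeral_2_eq_2 Suc_diff_Suc)
  have f0: "(fact n :: real) = real n * ((real n - 1) * F)"
    using n2 fact_reduce[of n, where 'a=real] f1 by simp
  have hn: "h \<le> real n" "s \<le> real n"
    using card_mono[OF assms(1) assms(3)] card_mono[OF assms(1) assms(2)] unfolding h_def s_def n_def
    by auto
  have F0: "F > 0" unfolding F_def by simp
  have E1: "(\<Sum>p\<in>{p. p permutes A}. X p) = h * s * ((real n - 1) * F)"
    using sumX1[OF assms(1-3)] f1 unfolding X_def h_def s_def n_def by simp
  have E2: "(\<Sum>p\<in>{p. p permutes A}. (X p)^2) = h * s * ((real n - 1) * F) + h * (h - 1) * s * (s - 1) * F"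
    using sumX2[OF assms(1-3)] f1 unfolding X_def h_def s_def n_def F_def by (simp add: mult.assoc)
  have mu: "\<mu> = h * s / real n" unfolding \<mu>_def h_def s_def n_def by simp
  have "(\<Sum>p\<in>{p. p permutes A}. (X p - \<mu>)^2) =
      (\<Sum>p\<in>{p. p permutes A}. (X p)^2) - 2 * \<mu> * (\<Sum>p\<in>{p. p permutes A}. X p) + fact n * \<mu>^2"
    by (simp add: power2_diff sum.distrib sum_subtractf sum_distrib_left cP mult_ac)
  also have "\<dots> = h * s * ((real n - 1) * F) + h * (h - 1) * s * (s - 1) * F
       - (h * s)^2 * (real n - 1) / real n * F"
    unfolding E1 E2 f0 mu using n2 by (simp add: field_simps power2_eq_square)
  also have "\<dots> \<le> h * s * ((real n - 1) * F)"
  proof -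
    have "h * (h - 1) * s * (s - 1) \<le> (h * s)^2 * (real n - 1) / real n"
      by (rule alg_key) (use hn n2 in \<open>auto simp: h_def s_def\<close>)
    then have "h * (h - 1) * s * (s - 1) * F \<le> (h * s)^2 * (real n - 1) / real n * F"
      using F0 by (intro mult_right_mono) auto
    then show ?thesis by simp
  qed
  also have "\<dots> = fact n * \<mu>"
    unfolding f0 mu using n2 by (simp add: field_simps)
  finally show ?thesis unfolding X_def n_def .
qed

lemma cheb:
  assumes "finite A" "S \<subseteq> A" "T \<subseteq> A" "card A \<ge> 2"
  defines "\<mu> \<equiv> real (card T) * real (card S) / real (card A)"
  assumes "\<mu> < r"
  shows "real (card {p. p permutes A \<and> r \<le> (\<Sum>t\<in>T. of_bool (p t \<in> S) :: real)}) * (r - \<mu>)^2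
          \<le> fact (card A) * \<mu>"
proof -
  define X where "X = (\<lambda>p. (\<Sum>t\<in>T. of_bool (p t \<in> S) :: real))"
  have fP: "finite {p. p permutes A}" using finite_permutations[OF assms(1)] by simp
  let ?B = "{p. p permutes A \<and> r \<le> X p}"
  have "real (card ?B) * (r - \<mu>)^2 = (\<Sum>p\<in>?B. (r - \<mu>)^2)" by simp
  also have "\<dots> \<le> (\<Sum>p\<in>?B. (X p - \<mu>)^2)"
  proof (rule sum_mono)
    fix p assume "p \<in> ?B"
    then have "r - \<mu> \<le> X p - \<mu>" "0 \<le> r - \<mu>" using assms(6) by auto
    then show "(r - \<mu>)^2 \<le> (X p - \<mu>)^2" by (rule power_mono)
  qed
  also have "\<dots> \<le> (\<Sum>p\<in>{p. p permutes A}. (X p - \<mu>)^2)"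
    by (rule sum_mono2[OF fP]) auto
  also have "\<dots> \<le> fact (card A) * \<mu>"
    unfolding X_def \<mu>_def by (rule var_sum[OF assms(1-4)])
  finally show ?thesis unfolding X_def .
qed

lemma ll_mem:
  assumes "finite S" "S \<noteq> {}"
  shows "least_loaded L S \<in> S"
proof -
  obtain i where i: "i \<in> S" "\<forall>j\<in>S. L i \<le> L j"
  proof -
    have "Min (L ` S) \<in> L ` S" using assms by (intro Min_in) auto
    then obtain i where "i \<in> S" "L i = Min (L ` S)" by auto
    then show ?thesis using that[of i] assms by auto
  qed
  then have "\<exists>i. i \<in> S \<and> (\<forall>j\<in>S. L i \<le> L j)" by blast
  from LeastI_ex[OF this] show ?thesis unfolding least_loaded_def by blast
qed

lemma step_inv:
  assumes "\<tau> \<le> \<theta>" "2 ^ d < m"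
    and lgp: "lg (\<pi> i) \<Longrightarrow> \<theta> < ps ! \<pi> i"
    and nlgp: "\<not> lg (\<pi> i) \<Longrightarrow> ps ! \<pi> i \<le> \<theta>"
    and coin: "length ps div 8 \<le> i \<Longrightarrow> lg (\<pi> i) \<Longrightarrow> ps ! \<pi> i < Pup \<Longrightarrow> \<not> cs i"
  shows "snd (snd (Ad_step m d ps \<pi> cs Pup (L, A, \<tau>) i)) \<le> \<theta> \<and>
         (\<exists>x. fst (snd (Ad_step m d ps \<pi> cs Pup (L, A, \<tau>) i)) = A(\<pi> i := x) \<and> (lg (\<pi> i) \<longrightarrow> 2 ^ d \<le> x))"
proof -
  have big: "least_loaded L {2 ^ d..<m} \<in> {2 ^ d..<m}"
    by (rule ll_mem) (use assms(2) in auto)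
  then have big': "2 ^ d \<le> least_loaded L {2 ^ d..<m}" by auto
  define p where "p = ps ! \<pi> i"
  show ?thesis
  proof (cases "i < length ps div 8 \<or> Pup \<le> p")
    case True
    then show ?thesis using big' assms(1) unfolding p_def by (auto simp: Let_def)
  next
    case False
    define \<tau>' where "\<tau>' = (if \<tau> < p \<and> cs i then p else \<tau>)"
    have st: "Ad_step m d ps \<pi> cs Pup (L, A, \<tau>) i =
       (if p \<le> \<tau>' then (L(least_loaded L {..<2 ^ d} := L (least_loaded L {..<2 ^ d}) + p), A(\<pi> i := least_loaded L {..<2 ^ d}), \<tau>')
        else (L(least_loaded L {2 ^ d..<m} := L (least_loaded L {2 ^ d..<m}) + p), A(\<pi> i := least_loaded L {2 ^ d..<m}), \<tau>'))"
      using False unfolding p_def \<tau>'_def by (simp add: Let_def)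
    show ?thesis
    proof (cases "lg (\<pi> i)")
      case True
      then have "\<not> cs i" using coin False unfolding p_def by auto
      then have "\<tau>' = \<tau>" unfolding \<tau>'_def by simp
      moreover have "\<not> p \<le> \<tau>" using lgp[OF True] assms(1) unfolding p_def by simp
      ultimately show ?thesis using st big' assms(1) True by auto
    next
      case False
      then have "p \<le> \<theta>" using nlgp unfolding p_def by simp
      then have "\<tau>' \<le> \<theta>" unfolding \<tau>'_def using assms(1) by auto
      then show ?thesis using st False by auto
    qed
  qed
qed

lemma run_inv:
  assumes "\<pi> permutes {..<length ps}" "2 ^ d < m" "0 \<le> \<theta>"
    and lgp: "\<And>j. j < length ps \<Longrightarrow> lg j \<Longrightarrow> \<theta> < ps ! j"
    and nlgp: "\<And>j. j < length ps \<Longrightarrow> \<not> lg j \<Longrightarrow> ps ! j \<le> \<theta>"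
    and coin: "\<And>i. length ps div 8 \<le> i \<Longrightarrow> i < length ps \<Longrightarrow> lg (\<pi> i) \<Longrightarrow> ps ! \<pi> i < Pup \<Longrightarrow> \<not> cs i"
    and "k \<le> length ps"
  shows "snd (snd (foldl (Ad_step m d ps \<pi> cs Pup) (\<lambda>_. 0, \<lambda>_. 0, 0) [0..<k])) \<le> \<theta> \<and>
         (\<forall>t<k. lg (\<pi> t) \<longrightarrow> 2 ^ d \<le> fst (snd (foldl (Ad_step m d ps \<pi> cs Pup) (\<lambda>_. 0, \<lambda>_. 0, 0) [0..<k])) (\<pi> t))"
  using assms(7)
proof (induction k)
  case 0
  then show ?case using assms(3) by simp
next
  case (Suc k)
  obtain L A \<tau> where s: "foldl (Ad_step m d ps \<pi> cs Pup) (\<lambda>_. 0, \<lambda>_. 0, 0) [0..<k] = (L, A, \<tau>)"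
    by (metis prod.exhaust)
  have k: "k < length ps" using Suc by simp
  have pik: "\<pi> k < length ps" using permutes_in_image[OF assms(1)] k by auto
  have IH: "\<tau> \<le> \<theta>" "\<forall>t<k. lg (\<pi> t) \<longrightarrow> 2 ^ d \<le> A (\<pi> t)"
    using Suc s by auto
  have si: "snd (snd (Ad_step m d ps \<pi> cs Pup (L, A, \<tau>) k)) \<le> \<theta> \<and>
         (\<exists>x. fst (snd (Ad_step m d ps \<pi> cs Pup (L, A, \<tau>) k)) = A(\<pi> k := x) \<and> (lg (\<pi> k) \<longrightarrow> 2 ^ d \<le> x))"
    by (rule step_inv[OF IH(1) assms(2)]) (use lgp nlgp coin pik k in auto)
  then obtain x where x: "fst (snd (Ad_step m d ps \<pi> cs Pup (L, A, \<tau>) k)) = A(\<pi> k := x)"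
     "lg (\<pi> k) \<longrightarrow> 2 ^ d \<le> x" by blast
  have inj: "\<And>t. t < k \<Longrightarrow> \<pi> t \<noteq> \<pi> k"
    using permutes_inj[OF assms(1)] by (metis less_irrefl injD)
  show ?case
  proof -
    have "foldl (Ad_step m d ps \<pi> cs Pup) (\<lambda>_. 0, \<lambda>_. 0, 0) [0..<Suc k] = Ad_step m d ps \<pi> cs Pup (L, A, \<tau>) k"
      using s by simp
    moreover have "\<forall>t<Suc k. lg (\<pi> t) \<longrightarrow> 2 ^ d \<le> (A(\<pi> k := x)) (\<pi> t)"
    proof (intro allI impI)
      fix t assume "t < Suc k" "lg (\<pi> t)"
      then show "2 ^ d \<le> (A(\<pi> k := x)) (\<pi> t)"
        using IH(2) x(2) inj by (cases "t = k") auto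
    qed
    ultimately show ?thesis using si x(1) by simp
  qed
qed

lemma run_ok:
  assumes "\<pi> permutes {..<length ps}" "2 ^ d < m" "0 \<le> \<theta>"
    and lgp: "\<And>j. j < length ps \<Longrightarrow> lg j \<Longrightarrow> \<theta> < ps ! j"
    and nlgp: "\<And>j. j < length ps \<Longrightarrow> \<not> lg j \<Longrightarrow> ps ! j \<le> \<theta>"
    and coin: "\<And>i. length ps div 8 \<le> i \<Longrightarrow> i < length ps \<Longrightarrow> lg (\<pi> i) \<Longrightarrow> ps ! \<pi> i < threshold m d ps \<pi> \<Longrightarrow> \<not> cs i"
    and j: "j < length ps" "lg j"
  shows "2 ^ d \<le> Ad_run m d ps \<pi> cs j"
proof -
  obtain t where t: "t < length ps" "\<pi> t = j"
  proof -
    have "inv \<pi> permutes {..<length ps}" by (rule permutes_inv[OF assms(1)])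
    then have "inv \<pi> j < length ps" using permutes_in_image j(1) by fastforce
    moreover have "\<pi> (inv \<pi> j) = j" by (rule permutes_inverses(1)[OF assms(1)])
    ultimately show ?thesis using that by blast
  qed
  have "snd (snd (foldl (Ad_step m d ps \<pi> cs (threshold m d ps \<pi>)) (\<lambda>_. 0, \<lambda>_. 0, 0) [0..<length ps])) \<le> \<theta> \<and>
    (\<forall>t<length ps. lg (\<pi> t) \<longrightarrow> 2 ^ d \<le> fst (snd (foldl (Ad_step m d ps \<pi> cs (threshold m d ps \<pi>)) (\<lambda>_. 0, \<lambda>_. 0, 0) [0..<length ps])) (\<pi> t))"
    by (rule run_inv[OF assms(1-3) lgp nlgp coin order.refl])
  then have "lg (\<pi> t) \<longrightarrow> 2 ^ d \<le> fst (snd (foldl (Ad_step m d ps \<pi> cs (threshold m d ps \<pi>)) (\<lambda>_. 0, \<lambda>_. 0, 0) [0..<length ps])) (\<pi> t)"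
    using t(1) by blast
  then show ?thesis using t(2) j(2) unfolding Ad_run_def by simp
qed

lemma sorted_count:
  fixes ys :: "real list"
  assumes "1 \<le> r" "r \<le> length ys" "v < rev (sort ys) ! (r - 1)"
  shows "r \<le> length (filter (\<lambda>x. v < x) ys)"
proof -
  define xs where "xs = rev (sort ys)"
  have lx: "length xs = length ys" unfolding xs_def by simp
  have mono: "xs ! (r - 1) \<le> xs ! i" if "i < r" for i
  proof -
    have "xs ! i = sort ys ! (length ys - Suc i)"
      unfolding xs_def using that assms by (simp add: rev_nth)
    moreover have "xs ! (r - 1) = sort ys ! (length ys - Suc (r - 1))"
      unfolding xs_def using that assms by (simp add: rev_nth)
    moreover have "sort ys ! (length ys - Suc (r - 1)) \<le> sort ys ! (length ys - Suc i)"
      by (rule sorted_nth_mono) (use that assms in auto)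
    ultimately show ?thesis by simp
  qed
  have "{0..<r} \<subseteq> {i. i < length xs \<and> v < xs ! i}"
    using mono assms lx unfolding xs_def[symmetric] by fastforce
  then have "r \<le> card {i. i < length xs \<and> v < xs ! i}"
    by (metis card_atLeastLessThan card_mono diff_zero finite_Collect_conjI finite_Collect_less_nat)
  also have "\<dots> = length (filter (\<lambda>x. v < x) xs)"
    by (rule length_filter_conv_card[symmetric])
  also have "\<dots> = length (filter (\<lambda>x. v < x) ys)"
    unfolding xs_def by (metis length_rev mset_filter mset_sort rev_filter size_mset)
  finally show ?thesis .
qed

lemma threshold_count:
  assumes "1 \<le> r" "r \<le> length ps div 8"
    "r = nat \<lceil>real (m - 2 ^ d) / 8 - sqrt (real m) / 2\<rceil>"
    "v < threshold m d ps \<pi>"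
  shows "r \<le> card {t. t < length ps div 8 \<and> v < ps ! \<pi> t}"
proof -
  define ys where "ys = map (\<lambda>t. ps ! \<pi> t) [0..<length ps div 8]"
  have "threshold m d ps \<pi> = rev (sort ys) ! (r - 1)"
    unfolding threshold_def ys_def assms(3) Let_def by simp
  then have "r \<le> length (filter (\<lambda>x. v < x) ys)"
    using assms by (intro sorted_count) (auto simp: ys_def)
  also have "\<dots> = card {t. t < length ps div 8 \<and> v < ps ! \<pi> t}"
    unfolding ys_def length_filter_conv_card by (intro arg_cong[where f=card]) auto
  finally show ?thesis .
qed

lemma top_set:
  fixes f :: "nat \<Rightarrow> real"
  assumes "finite L" "s \<le> card L"
  shows "\<exists>S\<subseteq>L. card S = s \<and> (\<forall>i\<in>S. \<forall>j\<in>L - S. f j \<le> f i)"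
  using assms(2)
proof (induction s)
  case 0
  then show ?case by (intro exI[of _ "{}"]) auto
next
  case (Suc s)
  then obtain S where S: "S \<subseteq> L" "card S = s" "\<forall>i\<in>S. \<forall>j\<in>L - S. f j \<le> f i" by auto
  have fS: "finite S" using S(1) assms(1) finite_subset by blast
  have ne: "L - S \<noteq> {}"
  proof
    assume "L - S = {}"
    then have "L \<subseteq> S" by auto
    then have "card L \<le> card S" using fS card_mono by blast
    then show False using S(2) Suc.prems by simp
  qed
  have fin: "finite (L - S)" using assms(1) by simp
  have "Max (f ` (L - S)) \<in> f ` (L - S)" using fin ne by (intro Max_in) auto
  then obtain a where a: "a \<in> L - S" "f a = Max (f ` (L - S))" by auto
  have amax: "\<forall>j\<in>L - S. f j \<le> f a" using a fin by auto
  show ?case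
  proof (intro exI[of _ "insert a S"] conjI)
    show "insert a S \<subseteq> L" using a S by auto
    show "card (insert a S) = Suc s" using a S fS by simp
    show "\<forall>i\<in>insert a S. \<forall>j\<in>L - insert a S. f j \<le> f i"
      using amax S(3) by auto
  qed
qed

lemma OPT_nonneg:
  assumes "m \<ge> 1" "\<forall>p\<in>set ps. 0 \<le> p"
  shows "0 \<le> OPT m ps"
proof -
  define F where "F = {..<length ps} \<rightarrow>\<^sub>E {..<m}"
  define g where "g = (\<lambda>f. Min (load ps f ` {..<m}))"
  have fF: "finite F" unfolding F_def by (simp add: finite_PiE)
  define f0 where "f0 = (\<lambda>j. if j < length ps then (0::nat) else undefined)"
  have f0F: "f0 \<in> F" unfolding F_def f0_def using assms(1) by (auto simp: PiE_def extensional_def)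
  have ld: "0 \<le> load ps f i" for f i
    unfolding load_def using assms(2) by (intro sum_nonneg) (auto simp: nth_mem)
  have "0 \<le> g f0"
    unfolding g_def using assms(1) ld by (subst Min_ge_iff) (auto simp: lessThan_empty_iff)
  also have "g f0 \<le> Max (g ` F)" using fF f0F by (intro Max_ge) auto
  finally show ?thesis unfolding OPT_def F_def g_def .
qed

lemma coin_all_false:
  assumes "finite I" "T \<subseteq> I" "0 \<le> q" "q \<le> 1"
  shows "measure_pmf.prob (Pi_pmf I False (\<lambda>_. bernoulli_pmf q)) {cs. \<forall>t\<in>T. \<not> cs t} = (1 - q) ^ card T"
proof -
  define B where "B = (\<lambda>x. if x \<in> T then {False} else (UNIV :: bool set))"
  have "{cs. \<forall>t\<in>T. \<not> cs t} = Pi I B"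
    using assms(2) unfolding B_def Pi_def by auto
  then have "measure_pmf.prob (Pi_pmf I False (\<lambda>_. bernoulli_pmf q)) {cs. \<forall>t\<in>T. \<not> cs t}
      = (\<Prod>x\<in>I. measure_pmf.prob (bernoulli_pmf q) (B x))"
    using measure_Pi_pmf_Pi[OF assms(1)] by simp
  also have "\<dots> = (\<Prod>x\<in>I. if x \<in> T then 1 - q else 1)"
    by (rule prod.cong) (use assms in \<open>auto simp: B_def measure_pmf_single\<close>)
  also have "\<dots> = (1 - q) ^ card T"
    using assms by (simp add: prod.If_cases Int_absorb1)
  finally show ?thesis .
qed

lemma pow2_ceil_log:
  fixes x :: real
  assumes "1 \<le> x"
  shows "x \<le> 2 ^ nat \<lceil>log 2 x\<rceil>" "2 ^ nat \<lceil>log 2 x\<rceil> < 2 * x"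
proof -
  have l0: "0 \<le> log 2 x" using assms by simp
  then have c0: "0 \<le> \<lceil>log 2 x\<rceil>" by simp
  have e: "(2::real) ^ nat \<lceil>log 2 x\<rceil> = 2 powr (real_of_int \<lceil>log 2 x\<rceil>)"
  proof -
    have "(2::real) powr (real (nat \<lceil>log 2 x\<rceil>)) = 2 ^ nat \<lceil>log 2 x\<rceil>" by (rule powr_realpow) simp
    moreover have "real (nat \<lceil>log 2 x\<rceil>) = real_of_int \<lceil>log 2 x\<rceil>" using c0 by simp
    ultimately show ?thesis by simp
  qed
  have "x = 2 powr (log 2 x)" using assms by simp
  also have "\<dots> \<le> 2 powr (real_of_int \<lceil>log 2 x\<rceil>)" by (intro powr_mono) auto
  finally show "x \<le> 2 ^ nat \<lceil>log 2 x\<rceil>" using e by simp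
  have "2 powr (real_of_int \<lceil>log 2 x\<rceil>) < 2 powr (log 2 x + 1)"
    by (intro powr_less_mono) linarith+
  also have "\<dots> = 2 * x" using assms by (simp add: powr_add)
  finally show "2 ^ nat \<lceil>log 2 x\<rceil> < 2 * x" using e by simp
qed

lemma numeric:
  fixes m k :: nat
  assumes "k < m" "real k > real m - real m powr (3/4) / 50"
  defines "D \<equiv> (2::real) ^ nat \<lceil>log 2 (real (m - k))\<rceil>"
  shows "185 \<le> m" "real (m - k) \<le> D" "D < real m" "8 * sqrt (real m) \<le> real m - D" "13 \<le> sqrt (real m)"
proof -
  have x1: "1 \<le> real (m - k)" using assms(1) by simp
  have xm: "real (m - k) < real m powr (3/4) / 50" using assms(1,2) by (simp add: of_nat_diff)
  have m1: "1 \<le> real m" using assms(1) by simp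
  have "50 < real m powr (3/4)" using x1 xm by simp
  then have "50 ^ 4 < (real m powr (3/4)) ^ 4" by (intro power_strict_mono) auto
  also have "(real m powr (3/4)) ^ 4 = real m ^ 3"
  proof -
    have "(real m powr (3/4)) ^ 4 = real m powr (real 4 * (3/4))"
      using m1 by (intro powr_power) auto
    also have "\<dots> = real m powr (real 3)" by simp
    also have "\<dots> = real m ^ 3" using m1 by (intro powr_realpow) auto
    finally show ?thesis .
  qed
  finally have m3: "6250000 < real m ^ 3" by simp
  show m185: "185 \<le> m"
  proof (rule ccontr)
    assume "\<not> 185 \<le> m"
    then have "real m \<le> 184" by simp
    then have "real m ^ 3 \<le> 184 ^ 3" using m1 by (intro power_mono) auto
    then show False using m3 by simp
  qed
  show "real (m - k) \<le> D" unfolding D_def by (rule pow2_ceil_log(1)[OF x1])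
  have D2: "D < 2 * real (m - k)" unfolding D_def by (rule pow2_ceil_log(2)[OF x1])
  have "real m powr (3/4) \<le> real m powr 1" using m1 by (intro powr_mono) auto
  then have pm: "real m powr (3/4) \<le> real m" using m1 by simp
  have Dm: "D < real m / 25" using D2 xm pm by simp
  then show "D < real m" using m1 by simp
  have s13: "13 \<le> sqrt (real m)"
  proof -
    have "sqrt 169 \<le> sqrt (real m)" using m185 by (subst real_sqrt_le_iff) simp
    then show ?thesis by simp
  qed
  then show "13 \<le> sqrt (real m)" .
  have "8 * sqrt (real m) \<le> 24 / 25 * real m"
  proof -
    have "8 * sqrt (real m) * 13 \<le> 8 * sqrt (real m) * sqrt (real m)"
      using s13 by (intro mult_left_mono) auto
    also have "\<dots> = 8 * real m" by simp
    finally show ?thesis by simp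
  qed
  then show "8 * sqrt (real m) \<le> real m - D" using Dm by simp
qed

lemma per_pi:
  fixes ps :: "real list"
  assumes perm: "\<pi> permutes {..<length ps}"
    and Dm: "2 ^ d < m" and th0: "0 \<le> \<theta>"
    and lgiff: "\<And>j. lg j \<longleftrightarrow> \<theta> < ps ! j"
    and SL: "S \<subseteq> {j. j < length ps \<and> lg j}"
    and top: "\<forall>i\<in>S. \<forall>j\<in>{j. j < length ps \<and> lg j} - S. ps ! j \<le> ps ! i"
    and r1: "1 \<le> r" and rh: "r \<le> length ps div 8"
    and rdef: "r = nat \<lceil>real (m - 2 ^ d) / 8 - sqrt (real m) / 2\<rceil>"
    and Xr: "card {t. t < length ps div 8 \<and> \<pi> t \<in> S} < r"
    and q: "0 \<le> q" "q \<le> 1"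
    and c0: "c0 \<le> 1 - real (card {j. j < length ps \<and> lg j} - card S) * q"
  shows "c0 \<le> measure_pmf.prob (Pi_pmf {..<length ps} False (\<lambda>_. bernoulli_pmf q))
              {cs. \<forall>j<length ps. lg j \<longrightarrow> 2 ^ d \<le> Ad_run m d ps \<pi> cs j}"
proof -
  define n where "n = length ps"
  define Ls where "Ls = {j. j < length ps \<and> lg j}"
  define T where "T = {t. length ps div 8 \<le> t \<and> t < length ps \<and> lg (\<pi> t) \<and> ps ! \<pi> t < threshold m d ps \<pi>}"
  have pin: "\<And>t. t < length ps \<Longrightarrow> \<pi> t < length ps"
    using permutes_in_image[OF perm] by auto
  have inS: "\<pi> t \<in> Ls - S" if t: "t \<in> T" for t
  proof -
    have t1: "t < length ps" "lg (\<pi> t)" "ps ! \<pi> t < threshold m d ps \<pi>" using t unfolding T_def by auto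
    have "\<pi> t \<in> Ls" using t1 pin unfolding Ls_def by auto
    moreover have "\<pi> t \<notin> S"
    proof
      assume jS: "\<pi> t \<in> S"
      define v where "v = ps ! \<pi> t"
      have "r \<le> card {t'. t' < length ps div 8 \<and> v < ps ! \<pi> t'}"
        by (rule threshold_count[OF r1 rh rdef]) (use t1 in \<open>simp add: v_def\<close>)
      also have "\<dots> \<le> card {t. t < length ps div 8 \<and> \<pi> t \<in> S}"
      proof (rule card_mono)
        show "finite {t. t < length ps div 8 \<and> \<pi> t \<in> S}" by simp
        show "{t'. t' < length ps div 8 \<and> v < ps ! \<pi> t'} \<subseteq> {t. t < length ps div 8 \<and> \<pi> t \<in> S}"
        proof (intro subsetI)
          fix t' assume "t' \<in> {t'. t' < length ps div 8 \<and> v < ps ! \<pi> t'}"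
          then have t': "t' < length ps div 8" "v < ps ! \<pi> t'" by auto
          have pt': "\<pi> t' < length ps" using t' pin by (meson div_le_dividend order_less_le_trans)
          have "\<pi> t' \<in> S"
          proof (rule ccontr)
            assume nS: "\<pi> t' \<notin> S"
            show False
            proof (cases "lg (\<pi> t')")
              case True
              then have "\<pi> t' \<in> Ls - S" using nS pt' unfolding Ls_def by auto
              then have "ps ! \<pi> t' \<le> v" using top jS unfolding v_def Ls_def by blast
              then show False using t' by simp
            next
              case False
              then have "ps ! \<pi> t' \<le> \<theta>" using lgiff by (meson not_less)
              moreover have "\<theta> < v" using jS SL lgiff unfolding v_def by auto
              ultimately show False using t' by simp
            qed
          qed
          then show "t' \<in> {t. t < length ps div 8 \<and> \<pi> t \<in> S}" using t' by simp
        qed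
      qed
      finally show False using Xr by simp
    qed
    ultimately show ?thesis by simp
  qed
  have fLs: "finite Ls" unfolding Ls_def by simp
  have cT: "card T \<le> card Ls - card S"
  proof -
    have "card T \<le> card (Ls - S)"
    proof (rule card_inj_on_le)
      show "inj_on \<pi> T" using permutes_inj[OF perm] by (auto simp: inj_on_def dest: injD)
      show "\<pi> ` T \<subseteq> Ls - S" using inS by auto
      show "finite (Ls - S)" using fLs by simp
    qed
    also have "card (Ls - S) = card Ls - card S"
      using SL fLs unfolding Ls_def by (intro card_Diff_subset) (auto intro: finite_subset)
    finally show ?thesis .
  qed
  have TI: "T \<subseteq> {..<length ps}" unfolding T_def by auto
  have "c0 \<le> 1 - real (card Ls - card S) * q" using c0 unfolding Ls_def .
  also have "\<dots> = 1 + real (card Ls - card S) * (- q)" by simp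
  also have "\<dots> \<le> (1 + (- q)) ^ (card Ls - card S)"
    by (rule Bernoulli_inequality) (use q in simp)
  also have "\<dots> = (1 - q) ^ (card Ls - card S)" by simp
  also have "\<dots> \<le> (1 - q) ^ card T"
    by (rule power_decreasing) (use cT q in auto)
  also have "\<dots> = measure_pmf.prob (Pi_pmf {..<length ps} False (\<lambda>_. bernoulli_pmf q)) {cs. \<forall>t\<in>T. \<not> cs t}"
    by (rule coin_all_false[symmetric]) (use TI q in auto)
  also have "\<dots> \<le> measure_pmf.prob (Pi_pmf {..<length ps} False (\<lambda>_. bernoulli_pmf q))
              {cs. \<forall>j<length ps. lg j \<longrightarrow> 2 ^ d \<le> Ad_run m d ps \<pi> cs j}"
  proof (rule measure_pmf.finite_measure_mono)
    show "{cs. \<forall>t\<in>T. \<not> cs t} \<subseteq> {cs. \<forall>j<length ps. lg j \<longrightarrow> 2 ^ d \<le> Ad_run m d ps \<pi> cs j}"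
    proof (intro subsetI CollectI allI impI)
      fix cs j assume cs: "cs \<in> {cs. \<forall>t\<in>T. \<not> cs t}" and j: "j < length ps" "lg j"
      have a1: "\<And>j. j < length ps \<Longrightarrow> lg j \<Longrightarrow> \<theta> < ps ! j" using lgiff by simp
      have a2: "\<And>j. j < length ps \<Longrightarrow> \<not> lg j \<Longrightarrow> ps ! j \<le> \<theta>" using lgiff by (meson not_less)
      have a3: "\<And>i. length ps div 8 \<le> i \<Longrightarrow> i < length ps \<Longrightarrow> lg (\<pi> i) \<Longrightarrow> ps ! \<pi> i < threshold m d ps \<pi> \<Longrightarrow> \<not> cs i"
        using cs unfolding T_def by auto
      show "2 ^ d \<le> Ad_run m d ps \<pi> cs j"
        by (rule run_ok[where lg=lg and cs=cs, OF perm Dm th0 a1 a2 a3 j])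
    qed
  qed simp
  finally show ?thesis .
qed

lemma pair_lower:
  fixes A :: "'a pmf" and B :: "'b pmf"
  assumes "\<And>a. a \<in> G \<Longrightarrow> measure_pmf.prob B {b. (a,b)\<in>E} \<ge> c" "c \<ge> 0"
  shows "measure_pmf.prob (pair_pmf A B) E \<ge> c * measure_pmf.prob A G"
proof -
  have "emeasure (measure_pmf (pair_pmf A B)) E = (\<integral>\<^sup>+x. indicator E x \<partial>pair_pmf A B)"
    by simp
  also have "\<dots> = (\<integral>\<^sup>+a. \<integral>\<^sup>+b. indicator E (a,b) \<partial>B \<partial>A)"
    by (rule nn_integral_pair_pmf')
  also have "\<dots> = (\<integral>\<^sup>+a. emeasure (measure_pmf B) {b. (a,b)\<in>E} \<partial>A)"
  proof (rule nn_integral_cong)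
    fix a
    have "(\<lambda>b. indicator E (a,b) :: ennreal) = indicator {b. (a,b)\<in>E}"
      by (auto simp: indicator_def)
    then show "(\<integral>\<^sup>+b. indicator E (a,b) \<partial>B) = emeasure (measure_pmf B) {b. (a,b)\<in>E}"
      by simp
  qed
  also have "\<dots> \<ge> (\<integral>\<^sup>+a. ennreal c * indicator G a \<partial>A)"
  proof (rule nn_integral_mono)
    fix a
    show "ennreal c * indicator G a \<le> emeasure (measure_pmf B) {b. (a,b)\<in>E}"
    proof (cases "a \<in> G")
      case True
      then show ?thesis using assms(1)[OF True]
        by (simp add: measure_pmf.emeasure_eq_measure)
    qed simp
  qed
  moreover have "(\<integral>\<^sup>+a. ennreal c * indicator G a \<partial>A) = ennreal c * emeasure (measure_pmf A) G"
    by (simp add: nn_integral_cmult_indicator)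
  ultimately have "ennreal c * emeasure (measure_pmf A) G \<le> emeasure (measure_pmf (pair_pmf A B)) E"
    by simp
  then show ?thesis
    using assms(2) by (simp add: measure_pmf.emeasure_eq_measure ennreal_mult[symmetric])
qed


lemma nat_ceil_bounds:
  fixes y :: real
  assumes "0 < y"
  shows "y \<le> real (nat \<lceil>y\<rceil>)" "real (nat \<lceil>y\<rceil>) < y + 1" "1 \<le> nat \<lceil>y\<rceil>"
proof -
  have c0: "0 < \<lceil>y\<rceil>" using assms by simp
  then have e: "real (nat \<lceil>y\<rceil>) = real_of_int \<lceil>y\<rceil>" by simp
  show "y \<le> real (nat \<lceil>y\<rceil>)" unfolding e by (rule le_of_int_ceiling)
  show "real (nat \<lceil>y\<rceil>) < y + 1" unfolding e using ceiling_correct[of y] by linarith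
  have "1 \<le> \<lceil>y\<rceil>" using c0 by simp
  then show "1 \<le> nat \<lceil>y\<rceil>" by (simp add: le_nat_iff)
qed

lemma nat_floor_bounds:
  fixes y :: real
  assumes "0 \<le> y"
  shows "real (nat \<lfloor>y\<rfloor>) \<le> y" "y - 1 < real (nat \<lfloor>y\<rfloor>)"
proof -
  have c0: "0 \<le> \<lfloor>y\<rfloor>" using assms by simp
  then have e: "real (nat \<lfloor>y\<rfloor>) = real_of_int \<lfloor>y\<rfloor>" by simp
  show "real (nat \<lfloor>y\<rfloor>) \<le> y" unfolding e by (rule of_int_floor_le)
  show "y - 1 < real (nat \<lfloor>y\<rfloor>)" unfolding e using floor_correct[of y] by linarith
qed

lemma main_bound:
  fixes ps :: "real list"
  assumes nn: "\<forall>p\<in>set ps. 0 \<le> p" and dv: "8 dvd length ps" and pr: "proper_input m ps"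
  shows "1/20 \<le> measure_pmf.prob (Ad_space m (degree m ps) ps)
          {(\<pi>, cs). \<forall>j<length ps. large_job m ps j \<longrightarrow>
                       2 ^ degree m ps \<le> Ad_run m (degree m ps) ps \<pi> cs j}"
proof -
  define n where "n = length ps"
  define k where "k = num_large m ps"
  define d where "d = degree m ps"
  define h where "h = n div 8"
  define lg where "lg = large_job m ps"
  define \<theta> where "\<theta> = OPT m ps / (100 * root 4 (real m))"
  define q where "q = coin_prob m d"
  define D where "D = (2::nat) ^ d"
  have nm: "m \<le> n" "k < m" "real k > real m - real m powr (3/4) / 50"
    using pr unfolding proper_input_def simple_input_def k_def n_def by auto
  have dD: "d = nat \<lceil>log 2 (real (m - k))\<rceil>" unfolding d_def degree_def k_def ..
  have DR: "real D = (2::real) ^ nat \<lceil>log 2 (real (m - k))\<rceil>" unfolding D_def dD by simp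
  note num = numeric[OF nm(2) nm(3), folded DR]
  have Dm: "D < m" using num(3) by simp
  have m1: "1 \<le> m" using nm by simp
  have hn: "real n = 8 * real h" using dv unfolding h_def n_def by auto
  have th0: "0 \<le> \<theta>" unfolding \<theta>_def using OPT_nonneg[OF m1 nn] m1 by simp
  have lgiff: "\<And>j. lg j \<longleftrightarrow> \<theta> < ps ! j" unfolding lg_def \<theta>_def large_job_def by simp
  define Ls where "Ls = {j. j < n \<and> lg j}"
  have cLs: "card Ls = k" unfolding Ls_def k_def num_large_def n_def lg_def ..
  have fLs: "finite Ls" unfolding Ls_def by simp
  define s where "s = nat \<lfloor>real m - real D - 8 * sqrt (real m)\<rfloor>"
  have s0: "0 \<le> real m - real D - 8 * sqrt (real m)" using num(4) by simp
  have s_le: "real s \<le> real m - real D - 8 * sqrt (real m)"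
    using nat_floor_bounds(1)[OF s0] unfolding s_def .
  have s_ge: "real s \<ge> real m - real D - 8 * sqrt (real m) - 1"
    using nat_floor_bounds(2)[OF s0] unfolding s_def by simp
  have s_k: "s \<le> k"
  proof -
    have "real s \<le> real k" using s_le num(2) num(5) nm(2) by (simp add: of_nat_diff)
    then show ?thesis by simp
  qed
  obtain S where S: "S \<subseteq> Ls" "card S = s" "\<forall>i\<in>S. \<forall>j\<in>Ls - S. ps ! j \<le> ps ! i"
    using top_set[OF fLs, of s "\<lambda>j. ps ! j"] s_k cLs by auto
  define r where "r = nat \<lceil>real (m - 2 ^ d) / 8 - sqrt (real m) / 2\<rceil>"
  have rr: "real (m - 2 ^ d) = real m - real D" using Dm unfolding D_def by (simp add: of_nat_diff)
  have ypos: "0 < (real m - real D) / 8 - sqrt (real m) / 2" using num(4) num(5) by simp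
  have r_ge: "real r \<ge> (real m - real D) / 8 - sqrt (real m) / 2"
    unfolding r_def rr by (rule nat_ceil_bounds(1)[OF ypos])
  have r1: "1 \<le> r"
    unfolding r_def rr by (rule nat_ceil_bounds(3)[OF ypos])
  have rh: "r \<le> h"
  proof -
    have "real r < (real m - real D) / 8 - sqrt (real m) / 2 + 1" unfolding r_def rr
      by (rule nat_ceil_bounds(2)[OF ypos])
    also have "\<dots> \<le> real h"
    proof -
      have "real m \<le> real n" using nm(1) by simp
      moreover have "0 \<le> real D" by simp
      ultimately show ?thesis using hn num(5) by (simp add: field_simps)
    qed
    finally show ?thesis by simp
  qed
  define A where "A = {..<n}"
  define P where "P = {p. p permutes A}"
  define X where "X = (\<lambda>p. (\<Sum>t\<in>{..<h}. of_bool (p t \<in> S) :: real))"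
  define B where "B = {p. p permutes A \<and> real r \<le> X p}"
  define \<mu> where "\<mu> = real (card {..<h}) * real (card S) / real (card A)"
  have mu: "\<mu> = real s / 8" unfolding \<mu>_def A_def using hn S(2) nm m1 by simp
  have gap: "sqrt (real m) / 2 \<le> real r - \<mu>" using mu s_le r_ge by (simp add: field_simps)
  have "0 \<le> real D" "0 \<le> sqrt (real m)" by simp_all
  then have "real s \<le> real m" using s_le by argo
  then have mu_le: "\<mu> \<le> real m / 8" using mu by (simp add: field_simps)
  have mu0: "0 \<le> \<mu>" using mu by simp
  have SA: "S \<subseteq> A" using S(1) unfolding Ls_def A_def by auto
  have hA: "{..<h} \<subseteq> A" unfolding A_def h_def by auto
  have cA: "card A \<ge> 2" unfolding A_def using nm num(1) by simp
  have fA: "finite A" unfolding A_def by simp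
  have cheb1: "real (card B) * (real r - \<mu>)^2 \<le> fact (card A) * \<mu>"
  proof -
    have "0 < sqrt (real m) / 2" using m1 by simp
    then have "\<mu> < real r" using gap by argo
    then show ?thesis unfolding B_def X_def \<mu>_def by (intro cheb[OF fA SA hA cA]) (simp add: \<mu>_def)
  qed
  have cP: "real (card P) = fact (card A)"
    unfolding P_def using card_permutations[OF refl fA] by simp
  have fP: "finite P" unfolding P_def using finite_permutations[OF fA] .
  have PB: "B \<subseteq> P" unfolding B_def P_def by auto
  have cB: "real (card B) \<le> real (card P) / 2"
  proof -
    have g2: "real m / 4 \<le> (real r - \<mu>)^2"
    proof -
      have "(sqrt (real m) / 2)^2 \<le> (real r - \<mu>)^2" using gap by (intro power_mono) auto
      then show ?thesis by (simp add: power_divide)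
    qed
    have "real (card B) * (real m / 4) \<le> real (card B) * (real r - \<mu>)^2"
      using g2 by (intro mult_left_mono) auto
    also have "\<dots> \<le> real (card P) * \<mu>" using cheb1 cP by simp
    also have "\<dots> \<le> real (card P) * (real m / 8)" using mu_le by (intro mult_left_mono) auto
    finally have "real (card B) * (real m / 4) \<le> real (card P) * (real m / 8)" .
    then show ?thesis using m1 by (simp add: field_simps)
  qed
  have Pne: "P \<noteq> {}" unfolding P_def using permutes_id by blast
  have probG: "1/2 \<le> measure_pmf.prob (pmf_of_set P) (P - B)"
  proof -
    have "measure_pmf.prob (pmf_of_set P) (P - B) = real (card (P - B)) / real (card P)"
      using fP Pne by (simp add: measure_pmf_of_set Int_absorb1)
    also have "real (card (P - B)) = real (card P) - real (card B)"
      using PB fP by (simp add: card_Diff_subset finite_subset of_nat_diff card_mono)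
    finally have pe: "measure_pmf.prob (pmf_of_set P) (P - B) = (real (card P) - real (card B)) / real (card P)" .
    have cpos: "0 < real (card P)" using fP Pne by (simp add: card_gt_0_iff)
    have "1/2 * real (card P) \<le> real (card P) - real (card B)" using cB by simp
    then have "1/2 \<le> (real (card P) - real (card B)) / real (card P)"
      using cpos by (simp add: le_divide_eq)
    then show ?thesis using pe by simp
  qed
  have q3: "q = 1 / (9 * real D * sqrt (real m))"
    unfolding q_def coin_prob_def D_def by simp
  have sq1: "1 \<le> sqrt (real m)" using m1 by simp
  have D1': "1 \<le> real D" unfolding D_def by simp
  have "1 * 1 \<le> real D * sqrt (real m)" using sq1 D1' by (intro mult_mono) auto
  then have qd: "1 \<le> 9 * real D * sqrt (real m)" by simp
  have q: "0 \<le> q" "q \<le> 1" "q = 1 / (9 * real D * sqrt (real m))"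
    using qd unfolding q3 by simp_all
  have c0: "1/10 \<le> 1 - real (card Ls - card S) * q"
  proof -
    have "real (card Ls - card S) = real k - real s" using cLs S(2) s_k by (simp add: of_nat_diff)
    also have "\<dots> \<le> real D + 8 * sqrt (real m)" using s_ge nm(2) by simp
    finally have N: "real (card Ls - card S) \<le> real D + 8 * sqrt (real m)" .
    have D1: "1 \<le> real D" unfolding D_def by simp
    have "real D + 8 * sqrt (real m) \<le> 81/10 * real D * sqrt (real m)"
    proof -
      have "real D * 13 \<le> real D * sqrt (real m)" using num(5) D1 by (intro mult_left_mono) auto
      moreover have "8 * sqrt (real m) \<le> 8 * real D * sqrt (real m)"
      proof -
        have "1 * sqrt (real m) \<le> real D * sqrt (real m)" using D1 by (intro mult_right_mono) auto
        then show ?thesis by simp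
      qed
      ultimately show ?thesis by simp
    qed
    then have "real (card Ls - card S) \<le> 81/10 * real D * sqrt (real m)" using N by simp
    then have "real (card Ls - card S) * q \<le> 81/10 * real D * sqrt (real m) * q"
      using q by (intro mult_right_mono) auto
    also have "\<dots> = 9/10" unfolding q(3) using D1 num(5) m1 by (simp add: field_simps)
    finally show ?thesis by simp
  qed
  define Q where "Q = Pi_pmf {..<n} False (\<lambda>_. bernoulli_pmf q)"
  define E where "E = {(\<pi>, cs). \<forall>j<n. lg j \<longrightarrow> D \<le> Ad_run m d ps \<pi> cs j}"
  have perpi: "1/10 \<le> measure_pmf.prob Q {cs. (\<pi>, cs) \<in> E}" if pi: "\<pi> \<in> P - B" for \<pi>
  proof -
    have perm: "\<pi> permutes {..<length ps}" using pi unfolding P_def A_def n_def by auto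
    have "\<not> real r \<le> X \<pi>" using pi unfolding B_def P_def by auto
    moreover have "X \<pi> = real (card {t. t < length ps div 8 \<and> \<pi> t \<in> S})"
    proof -
      have "X \<pi> = real (card ({..<h} \<inter> {t. \<pi> t \<in> S}))" unfolding X_def by simp
      also have "{..<h} \<inter> {t. \<pi> t \<in> S} = {t. t < length ps div 8 \<and> \<pi> t \<in> S}"
        unfolding h_def n_def by auto
      finally show ?thesis .
    qed
    ultimately have Xr: "card {t. t < length ps div 8 \<and> \<pi> t \<in> S} < r" by simp
    have "1/10 \<le> measure_pmf.prob (Pi_pmf {..<length ps} False (\<lambda>_. bernoulli_pmf q))
              {cs. \<forall>j<length ps. lg j \<longrightarrow> 2 ^ d \<le> Ad_run m d ps \<pi> cs j}"
    proof (rule per_pi[OF perm _ th0 lgiff _ _ r1 _ _ Xr q(1) q(2)])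
      show "2 ^ d < m" using Dm unfolding D_def .
      show "S \<subseteq> {j. j < length ps \<and> lg j}" using S(1) unfolding Ls_def n_def .
      show "\<forall>i\<in>S. \<forall>j\<in>{j. j < length ps \<and> lg j} - S. ps ! j \<le> ps ! i" using S(3) unfolding Ls_def n_def .
      show "r \<le> length ps div 8" using rh unfolding h_def n_def .
      show "r = nat \<lceil>real (m - 2 ^ d) / 8 - sqrt (real m) / 2\<rceil>" unfolding r_def ..
      show "1/10 \<le> 1 - real (card {j. j < length ps \<and> lg j} - card S) * q" using c0 unfolding Ls_def n_def .
    qed
    moreover have "{cs. (\<pi>, cs) \<in> E} = {cs. \<forall>j<length ps. lg j \<longrightarrow> 2 ^ d \<le> Ad_run m d ps \<pi> cs j}"
      unfolding E_def D_def n_def by auto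
    ultimately show ?thesis unfolding Q_def n_def by simp
  qed
  have "1/10 * measure_pmf.prob (pmf_of_set P) (P - B) \<le> measure_pmf.prob (pair_pmf (pmf_of_set P) Q) E"
    by (rule pair_lower[OF perpi]) simp_all
  moreover have "Ad_space m (degree m ps) ps = pair_pmf (pmf_of_set P) Q"
    unfolding Ad_space_def P_def A_def Q_def q_def d_def n_def ..
  moreover have "E = {(\<pi>, cs). \<forall>j<length ps. large_job m ps j \<longrightarrow>
                       2 ^ degree m ps \<le> Ad_run m (degree m ps) ps \<pi> cs j}"
    unfolding E_def n_def lg_def D_def d_def ..
  ultimately have fin: "1/10 * measure_pmf.prob (pmf_of_set P) (P - B) \<le> measure_pmf.prob (Ad_space m (degree m ps) ps)
          {(\<pi>, cs). \<forall>j<length ps. large_job m ps j \<longrightarrow>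
                       2 ^ degree m ps \<le> Ad_run m (degree m ps) ps \<pi> cs j}" by simp
  have "(1::real)/20 \<le> 1/10 * measure_pmf.prob (pmf_of_set P) (P - B)" using probG by simp
  then show ?thesis using fin by linarith
qed

theorem lemma8:
  "\<exists>c::real. c > 0 \<and>
     (\<forall>m ps. (\<forall>p\<in>set ps. 0 \<le> p) \<and> 8 dvd length ps \<and> proper_input m ps \<longrightarrow>
        measure_pmf.prob (Ad_space m (degree m ps) ps)
          {(\<pi>, cs). \<forall>j<length ps. large_job m ps j \<longrightarrow>
                       2 ^ degree m ps \<le> Ad_run m (degree m ps) ps \<pi> cs j} \<ge> c)"
proof (intro exI[of _ "1/20"] conjI allI impI)
  show "(0::real) < 1/20" by simp
next
  fix m ps
  assume H: "(\<forall>p\<in>set (ps::real list). 0 \<le> p) \<and> 8 dvd length ps \<and> proper_input m ps"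
  show "measure_pmf.prob (Ad_space m (degree m ps) ps)
          {(\<pi>, cs). \<forall>j<length ps. large_job m ps j \<longrightarrow>
                       2 ^ degree m ps \<le> Ad_run m (degree m ps) ps \<pi> cs j} \<ge> 1/20"
    using main_bound[of ps m] H by blast
qed

end
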